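(* Let $\psi\in\mathbf{\Psi}_n$. Define $|\!|\!|\cdot|\!|\!|_\psi:X^n\to\mathbb{R}$ by $$|\!|\!|x|\!|\!|_\psi:=\Big(\sum_{i=1}^n\|x_i\|\Big)\,\psi\Big(\frac{\|x_1\|}{\sum_{i=1}^n\|x_i\|},\ldots,\frac{\|x_{n}\|}{\sum_{i=1}^n\|x_i\|}\Big)\ \text{if } x\ne0_{X^n},\qquad |\!|\!|0_{X^n}|\!|\!|_\psi:=0,$$ for all $x:=(x_1,\ldots,x_n)\in X^n$. Then: (i) $|\!|\!|\cdot|\!|\!|_\psi \in\mathbf{N}_{X^n}$; (ii) if $\psi\in \mathbf{\Psi}^{\rm sc}_{n}$ and $\|\cdot\|$ is strictly convex, then $|\!|\!|\cdot|\!|\!|_\psi\in \mathbf{N}^{\rm sc}_{X^n}$; (iii) $\psi(s)=|\!|\!|(s_1\mathbf{u}_1,\ldots,s_{n}\mathbf{u}_n)|\!|\!|_{\psi}$ for all $(\mathbf{u}_1,\ldots,\mathbf{u}_n)\in \mathbb{S}_X\times\ldots\times\mathbb{S}_X$ and $s:=(s_1,\ldots,s_{n})\in\Omega_n$.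
   Context: Let $(X,\|\cdot\|)$ be a normed vector space, $n\ge2$, $\mathbb{S}_X$ its unit sphere. $\mathbf{N}_{X^n}$ is the family of norms $|\!|\!|\cdot|\!|\!|$ on $X^n$ satisfying (A1) $|\!|\!|(x_1,\ldots,x_n)|\!|\!|=|\!|\!|(\pm x_1,\ldots,\pm x_n)|\!|\!|$ for all $x\in X^n$ and all sign choices, and (A2) $|\!|\!|(0_X,\ldots,0_X,v,0_X,\ldots,0_X)|\!|\!|=\|v\|$ for all $v\in X$ in any $i$th position. $\mathbf{N}^{\rm sc}_{X^n}$ is its subclass of strictly convex norms. $\Omega_n:=\{t\in\mathbb{R}^n\mid t_i\ge0,\ \sum_i t_i=1\}$, $\Omega_n^\circ:=\{t\in\Omega_n\mid t_i<1\ \forall i\}$. $\mathbf{\Psi}_n$ is the class of convex continuous $\psi:\Omega_n\to\mathbb{R}$ with (B1) $\psi(\mathbf{e}_i)=1$ for all standard unit vectors $\mathbf{e}_i$ and (B2) $\psi(t)\ge(1-t_i)\psi\big(\frac{t_1}{1-t_i},\ldots,\frac{t_{i-1}}{1-t_i},0,\frac{t_{i+1}}{1-t_i},\ldots,\frac{t_n}{1-t_i}\big)$ for all $t\in\Omega_n^\circ$, $i=1,\ldots,n$; $\mathbf{\Psi}^{\rm sc}_n$ is its subclass of strictly convex functions. *)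

theory Defs
  imports "HOL-Analysis.Analysis"
begin

text \<open>X is a real normed vector space ('a :: real_normed_vector); X^n is modelled as
  'a ^ 'n with a finite index type 'n, n = CARD('n).\<close>

definition is_norm :: "('v::real_vector \<Rightarrow> real) \<Rightarrow> bool" where
  "is_norm N \<longleftrightarrow>
     (\<forall>x. 0 \<le> N x) \<and> (\<forall>x. N x = 0 \<longleftrightarrow> x = 0) \<and>
     (\<forall>c x. N (c *\<^sub>R x) = \<bar>c\<bar> * N x) \<and>
     (\<forall>x y. N (x + y) \<le> N x + N y)"

definition strictly_convex_norm :: "('v::real_vector \<Rightarrow> real) \<Rightarrow> bool" where
  "strictly_convex_norm N \<longleftrightarrow>
     (\<forall>x y. N x = 1 \<and> N y = 1 \<and> x \<noteq> y \<longrightarrow> N ((1/2) *\<^sub>R (x + y)) < 1)"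

definition N_class :: "(('a::real_normed_vector ^ 'n::finite) \<Rightarrow> real) \<Rightarrow> bool" where
  "N_class N \<longleftrightarrow> is_norm N \<and>
     (\<forall>x (\<epsilon>::'n \<Rightarrow> real). (\<forall>i. \<epsilon> i = 1 \<or> \<epsilon> i = -1) \<longrightarrow>
        N (\<chi> i. \<epsilon> i *\<^sub>R (x $ i)) = N x) \<and>
     (\<forall>i v. N (\<chi> j. if j = i then v else 0) = norm v)"

definition N_sc_class :: "(('a::real_normed_vector ^ 'n::finite) \<Rightarrow> real) \<Rightarrow> bool" where
  "N_sc_class N \<longleftrightarrow> N_class N \<and> strictly_convex_norm N"

definition Omega :: "(real ^ 'n::finite) set" where
  "Omega = {t. (\<forall>i. 0 \<le> t $ i) \<and> (\<Sum>i\<in>UNIV. t $ i) = 1}"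

definition Omega_int :: "(real ^ 'n::finite) set" where
  "Omega_int = {t \<in> Omega. \<forall>i. t $ i < 1}"

definition Psi_class :: "(real ^ 'n::finite \<Rightarrow> real) \<Rightarrow> bool" where
  "Psi_class \<psi> \<longleftrightarrow> convex_on Omega \<psi> \<and> continuous_on Omega \<psi> \<and>
     (\<forall>i. \<psi> (axis i 1) = 1) \<and>
     (\<forall>t\<in>Omega_int. \<forall>i.
        \<psi> t \<ge> (1 - t $ i) * \<psi> (\<chi> j. if j = i then 0 else t $ j / (1 - t $ i)))"

definition strictly_convex_on :: "'v::real_vector set \<Rightarrow> ('v \<Rightarrow> real) \<Rightarrow> bool" where
  "strictly_convex_on S f \<longleftrightarrow>
     (\<forall>x\<in>S. \<forall>y\<in>S. \<forall>u::real. x \<noteq> y \<and> 0 < u \<and> u < 1 \<longrightarrow>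
        f (u *\<^sub>R x + (1 - u) *\<^sub>R y) < u * f x + (1 - u) * f y)"

definition Psi_sc_class :: "(real ^ 'n::finite \<Rightarrow> real) \<Rightarrow> bool" where
  "Psi_sc_class \<psi> \<longleftrightarrow> Psi_class \<psi> \<and> strictly_convex_on Omega \<psi>"

definition psi_norm :: "(real ^ 'n::finite \<Rightarrow> real) \<Rightarrow> ('a::real_normed_vector ^ 'n) \<Rightarrow> real" where
  "psi_norm \<psi> x =
     (if x = 0 then 0
      else (\<Sum>i\<in>UNIV. norm (x $ i)) *
           \<psi> (\<chi> i. norm (x $ i) / (\<Sum>j\<in>UNIV. norm (x $ j))))"

end

theory Submission imports Defs begin

definition FF :: "(real ^ 'n::finite \<Rightarrow> real) \<Rightarrow> real ^ 'n \<Rightarrow> real" where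
  "FF \<psi> t = (if t = 0 then 0 else (\<Sum>i\<in>UNIV. t $ i) * \<psi> (\<chi> i. t $ i / (\<Sum>j\<in>UNIV. t $ j)))"

definition PP :: "(real ^ 'n::finite) set" where "PP = {t. \<forall>i. 0 \<le> t $ i}"

definition upd :: "real ^ 'n::finite \<Rightarrow> 'n \<Rightarrow> real \<Rightarrow> real ^ 'n" where
  "upd t i s = (\<chi> j. if j = i then s else t $ j)"

lemma psi_norm_FF: fixes x :: "'a::real_normed_vector ^ 'n::finite" shows "psi_norm \<psi> x = FF \<psi> (\<chi> i. norm (x $ i))"
proof -
  have "(x = 0) = ((\<chi> i. norm (x $ i)) = (0::real^'n))"
    by (simp add: vec_eq_iff)
  then show ?thesis unfolding psi_norm_def FF_def by simp
qed

lemma sum_pos: assumes "t \<in> PP" "t \<noteq> 0" shows "(\<Sum>i\<in>UNIV. t $ i) > 0"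
proof -
  obtain k where "t $ k \<noteq> 0" using assms(2) by (auto simp: vec_eq_iff)
  hence "t $ k > 0" using assms(1) by (auto simp: PP_def order_le_less)
  moreover have "t $ k \<le> (\<Sum>i\<in>UNIV. t $ i)"
    by (rule member_le_sum) (use assms(1) in \<open>auto simp: PP_def\<close>)
  ultimately show ?thesis by linarith
qed

lemma FF_hom: assumes "t \<in> PP" "c \<ge> 0" shows "FF \<psi> (c *\<^sub>R t) = c * FF \<psi> t"
proof (cases "c = 0 \<or> t = 0")
  case True then show ?thesis by (auto simp: FF_def)
next
  case False
  hence c: "c > 0" and t: "t \<noteq> 0" using assms by auto
  have "(\<Sum>i\<in>UNIV. (c *\<^sub>R t) $ i) = c * (\<Sum>i\<in>UNIV. t $ i)" by (simp add: sum_distrib_left)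
  moreover have "(\<chi> i. (c *\<^sub>R t) $ i / (c * (\<Sum>j\<in>UNIV. t $ j))) = (\<chi> i. t $ i / (\<Sum>j\<in>UNIV. t $ j))"
    using c by (simp add: vec_eq_iff)
  ultimately show ?thesis using c t by (simp add: FF_def)
qed

lemma FF_axis: assumes "\<psi> (axis i 1) = 1" "c \<ge> 0" shows "FF \<psi> (c *\<^sub>R axis i 1) = c"
proof -
  have "FF \<psi> (axis i 1) = 1"
  proof -
    have s: "(\<Sum>j\<in>UNIV. axis i (1::real) $ j) = 1" by (simp add: axis_def)
    have "(\<chi> j. axis i (1::real) $ j / 1) = axis i 1" by (simp add: vec_eq_iff)
    then show ?thesis using assms(1) s by (simp add: FF_def axis_def vec_eq_iff)
  qed
  moreover have "axis i 1 \<in> PP" by (simp add: PP_def axis_def)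
  ultimately show ?thesis using FF_hom assms(2) by fastforce
qed

lemma norm_in_Omega: assumes "t \<in> PP" "t \<noteq> 0" shows "(\<chi> i. t $ i / (\<Sum>j\<in>UNIV. t $ j)) \<in> Omega"
proof -
  have S: "(\<Sum>j\<in>UNIV. t $ j) > 0" using sum_pos assms by blast
  have "(\<Sum>i\<in>UNIV. t $ i / (\<Sum>j\<in>UNIV. t $ j)) = 1"
    using S by (simp add: sum_divide_distrib[symmetric])
  then show ?thesis using assms S by (auto simp: Omega_def PP_def)
qed

lemma FF_subadd_gen:
  assumes conv: "\<And>x y u. x \<in> Omega \<Longrightarrow> y \<in> Omega \<Longrightarrow> 0 < u \<Longrightarrow> u < 1 \<Longrightarrow> R x y \<Longrightarrow>
        \<psi> (u *\<^sub>R x + (1 - u) *\<^sub>R y) \<le> u * \<psi> x + (1 - u) * \<psi> y"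
    and a: "a \<in> PP" "a \<noteq> 0" and b: "b \<in> PP" "b \<noteq> 0"
    and R: "R (\<chi> i. a $ i / (\<Sum>j\<in>UNIV. a $ j)) (\<chi> i. b $ i / (\<Sum>j\<in>UNIV. b $ j))"
  shows "FF \<psi> (a + b) \<le> FF \<psi> a + FF \<psi> b"
proof -
  define S where "S = (\<Sum>j\<in>UNIV. a $ j)"
  define T where "T = (\<Sum>j\<in>UNIV. b $ j)"
  have S: "S > 0" using sum_pos a S_def by blast
  have T: "T > 0" using sum_pos b T_def by blast
  define x where "x = (\<chi> i. a $ i / S)"
  define y where "y = (\<chi> i. b $ i / T)"
  have x: "x \<in> Omega" using norm_in_Omega a x_def S_def by blast
  have y: "y \<in> Omega" using norm_in_Omega b y_def T_def by blast
  define u where "u = S / (S + T)"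
  have u: "0 < u" "u < 1" using S T by (auto simp: u_def)
  have u1: "1 - u = T / (S + T)" using S T by (simp add: u_def field_simps)
  have ab: "a + b \<noteq> 0"
  proof
    assume "a + b = 0"
    hence "(\<Sum>j\<in>UNIV. (a+b) $ j) = 0" by simp
    thus False using S T by (simp add: sum.distrib S_def T_def)
  qed
  have sab: "(\<Sum>j\<in>UNIV. (a + b) $ j) = S + T" by (simp add: sum.distrib S_def T_def)
  have eq: "(\<chi> i. (a + b) $ i / (S + T)) = u *\<^sub>R x + (1 - u) *\<^sub>R y"
  proof -
    have "\<And>i. (a $ i + b $ i) / (S + T) = S / (S + T) * (a $ i / S) + T / (S + T) * (b $ i / T)"
      using S T by (simp add: add_divide_distrib)
    then show ?thesis unfolding u1 unfolding u_def x_def y_def by (simp add: vec_eq_iff)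
  qed
  have "FF \<psi> (a + b) = (S + T) * \<psi> (u *\<^sub>R x + (1 - u) *\<^sub>R y)"
    using ab sab eq by (simp add: FF_def)
  also have "\<dots> \<le> (S + T) * (u * \<psi> x + (1 - u) * \<psi> y)"
    using conv[OF x y u] R S T by (simp add: x_def y_def S_def T_def)
  also have "\<dots> = S * \<psi> x + T * \<psi> y"
  proof -
    have "(S+T)*u = S" "(S+T)*(1-u) = T" using S T unfolding u1 by (auto simp: u_def)
    then show ?thesis by (simp add: distrib_left mult.assoc[symmetric])
  qed
  also have "\<dots> = FF \<psi> a + FF \<psi> b" using a b by (simp add: FF_def S_def T_def x_def y_def)
  finally show ?thesis .
qed

lemma FF_subadd_strict_gen:
  assumes conv: "\<And>x y u. x \<in> Omega \<Longrightarrow> y \<in> Omega \<Longrightarrow> 0 < u \<Longrightarrow> u < 1 \<Longrightarrow> R x y \<Longrightarrow>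
        \<psi> (u *\<^sub>R x + (1 - u) *\<^sub>R y) < u * \<psi> x + (1 - u) * \<psi> y"
    and a: "a \<in> PP" "a \<noteq> 0" and b: "b \<in> PP" "b \<noteq> 0"
    and R: "R (\<chi> i. a $ i / (\<Sum>j\<in>UNIV. a $ j)) (\<chi> i. b $ i / (\<Sum>j\<in>UNIV. b $ j))"
  shows "FF \<psi> (a + b) < FF \<psi> a + FF \<psi> b"
proof -
  define S where "S = (\<Sum>j\<in>UNIV. a $ j)"
  define T where "T = (\<Sum>j\<in>UNIV. b $ j)"
  have S: "S > 0" using sum_pos a S_def by blast
  have T: "T > 0" using sum_pos b T_def by blast
  define x where "x = (\<chi> i. a $ i / S)"
  define y where "y = (\<chi> i. b $ i / T)"
  have x: "x \<in> Omega" using norm_in_Omega a x_def S_def by blast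
  have y: "y \<in> Omega" using norm_in_Omega b y_def T_def by blast
  define u where "u = S / (S + T)"
  have u: "0 < u" "u < 1" using S T by (auto simp: u_def)
  have u1: "1 - u = T / (S + T)" using S T by (simp add: u_def field_simps)
  have ab: "a + b \<noteq> 0"
  proof
    assume "a + b = 0"
    hence "(\<Sum>j\<in>UNIV. (a+b) $ j) = 0" by simp
    thus False using S T by (simp add: sum.distrib S_def T_def)
  qed
  have sab: "(\<Sum>j\<in>UNIV. (a + b) $ j) = S + T" by (simp add: sum.distrib S_def T_def)
  have eq: "(\<chi> i. (a + b) $ i / (S + T)) = u *\<^sub>R x + (1 - u) *\<^sub>R y"
  proof -
    have "\<And>i. (a $ i + b $ i) / (S + T) = S / (S + T) * (a $ i / S) + T / (S + T) * (b $ i / T)"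
      using S T by (simp add: add_divide_distrib)
    then show ?thesis unfolding u1 unfolding u_def x_def y_def by (simp add: vec_eq_iff)
  qed
  have "FF \<psi> (a + b) = (S + T) * \<psi> (u *\<^sub>R x + (1 - u) *\<^sub>R y)"
    using ab sab eq by (simp add: FF_def)
  also have "\<dots> < (S + T) * (u * \<psi> x + (1 - u) * \<psi> y)"
    using conv[OF x y u] R S T by (simp add: x_def y_def S_def T_def)
  also have "\<dots> = S * \<psi> x + T * \<psi> y"
  proof -
    have "(S+T)*u = S" "(S+T)*(1-u) = T" using S T unfolding u1 by (auto simp: u_def)
    then show ?thesis by (simp add: distrib_left mult.assoc[symmetric])
  qed
  also have "\<dots> = FF \<psi> a + FF \<psi> b" using a b by (simp add: FF_def S_def T_def x_def y_def)
  finally show ?thesis .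
qed


lemma PP_add: "a \<in> PP \<Longrightarrow> b \<in> PP \<Longrightarrow> a + b \<in> PP" by (simp add: PP_def)
lemma PP_scale: "a \<in> PP \<Longrightarrow> c \<ge> 0 \<Longrightarrow> c *\<^sub>R a \<in> PP" by (simp add: PP_def)

lemma FF_subadd: fixes \<psi> :: "real ^ 'n::finite \<Rightarrow> real" assumes psi: "Psi_class \<psi>" and a: "a \<in> PP" and b: "b \<in> PP"
  shows "FF \<psi> (a + b) \<le> FF \<psi> a + FF \<psi> b"
proof (cases "a = 0 \<or> b = 0")
  case True then show ?thesis by (auto simp: FF_def)
next
  case False
  have cv: "convex_on Omega \<psi>" using psi by (simp add: Psi_class_def)
  show ?thesis
  proof (rule FF_subadd_gen[where R="\<lambda>_ _. True"])
    fix x y :: "real ^ 'n" and u :: real assume "x \<in> Omega" "y \<in> Omega" "0 < u" "u < 1"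
    then show "\<psi> (u *\<^sub>R x + (1 - u) *\<^sub>R y) \<le> u * \<psi> x + (1 - u) * \<psi> y"
      using cv by (auto simp: convex_on_def)
  qed (use a b False in auto)
qed

lemma FF_conv: assumes psi: "Psi_class \<psi>" and a: "a \<in> PP" and b: "b \<in> PP"
  and l: "0 \<le> l" "l \<le> 1"
  shows "FF \<psi> ((1 - l) *\<^sub>R a + l *\<^sub>R b) \<le> (1 - l) * FF \<psi> a + l * FF \<psi> b"
proof -
  have "FF \<psi> ((1 - l) *\<^sub>R a + l *\<^sub>R b) \<le> FF \<psi> ((1 - l) *\<^sub>R a) + FF \<psi> (l *\<^sub>R b)"
    by (intro FF_subadd[OF psi] PP_scale) (use a b l in auto)
  also have "\<dots> = (1 - l) * FF \<psi> a + l * FF \<psi> b" using FF_hom[OF a, of "1-l"] FF_hom[OF b, of l] l by simp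
  finally show ?thesis .
qed

lemma sum_upd0: "(\<Sum>j\<in>UNIV. upd t i 0 $ j) = (\<Sum>j\<in>UNIV. t $ j) - t $ i"
proof -
  have "(\<Sum>j\<in>UNIV. t $ j) = t $ i + (\<Sum>j\<in>UNIV - {i}. t $ j)"
    by (simp add: sum.remove)
  moreover have "(\<Sum>j\<in>UNIV. upd t i 0 $ j) = upd t i 0 $ i + (\<Sum>j\<in>UNIV - {i}. upd t i 0 $ j)"
    by (simp add: sum.remove)
  moreover have "(\<Sum>j\<in>UNIV - {i}. upd t i 0 $ j) = (\<Sum>j\<in>UNIV - {i}. t $ j)"
    by (rule sum.cong) (auto simp: upd_def)
  ultimately show ?thesis by (simp add: upd_def)
qed


lemma le_sum_PP: "t \<in> PP \<Longrightarrow> t $ k \<le> (\<Sum>j\<in>UNIV. t $ j)"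
  by (rule member_le_sum) (auto simp: PP_def)

lemma others_zero: assumes "t \<in> PP" "t $ k = (\<Sum>j\<in>UNIV. t $ j)" "j \<noteq> k" shows "t $ j = 0"
proof -
  have "(\<Sum>j\<in>UNIV. t $ j) = t $ k + (\<Sum>j\<in>UNIV - {k}. t $ j)" by (simp add: sum.remove)
  hence "(\<Sum>j\<in>UNIV - {k}. t $ j) = 0" using assms(2) by simp
  moreover have "\<forall>j\<in>UNIV - {k}. 0 \<le> t $ j" using assms(1) by (auto simp: PP_def)
  ultimately have "\<forall>j\<in>UNIV - {k}. t $ j = 0" using sum_nonneg_eq_0_iff[of "UNIV - {k}" "\<lambda>j. t $ j"] by simp
  then show ?thesis using assms(3) by blast
qed

lemma FF_B2: fixes \<psi> :: "real ^ 'n::finite \<Rightarrow> real"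
  assumes psi: "Psi_class \<psi>" and t: "t \<in> PP"
  shows "FF \<psi> (upd t i 0) \<le> FF \<psi> t"
proof (cases "t = 0")
  case True
  have "upd t i 0 = 0" using True by (simp add: upd_def vec_eq_iff)
  then show ?thesis using True by simp
next
  case False
  define S where "S = (\<Sum>j\<in>UNIV. t $ j)"
  have S: "S > 0" using sum_pos[OF t False] S_def by simp
  show ?thesis
  proof (cases "\<exists>k. t $ k = S")
    case True
    then obtain k where k: "t $ k = S" by blast
    have oz: "\<And>j. j \<noteq> k \<Longrightarrow> t $ j = 0" using others_zero[OF t] k S_def by blast
    show ?thesis
    proof (cases "k = i")
      case True
      have "upd t i 0 = 0" using oz True by (auto simp: upd_def vec_eq_iff)
      moreover have "t = S *\<^sub>R axis i 1" using oz True k by (auto simp: vec_eq_iff axis_def)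
      moreover have "\<psi> (axis i 1) = 1" using psi by (simp add: Psi_class_def)
      ultimately show ?thesis using FF_axis[of \<psi> i S] S by (simp add: FF_def)
    next
      case False
      have "upd t i 0 = t" using oz False by (auto simp: upd_def vec_eq_iff)
      then show ?thesis by simp
    qed
  next
    case False
    define w where "w = (\<chi> j. t $ j / S)"
    have wO: "w \<in> Omega" using norm_in_Omega[OF t] \<open>t \<noteq> 0\<close> by (simp add: w_def S_def)
    have lt: "\<And>k. t $ k < S" using False le_sum_PP[OF t] S_def by (metis order_le_less)
    have wI: "w \<in> Omega_int" using wO lt S by (simp add: Omega_int_def w_def)
    have B2: "\<psi> w \<ge> (1 - w $ i) * \<psi> (\<chi> j. if j = i then 0 else w $ j / (1 - w $ i))"
      using psi wI by (simp add: Psi_class_def)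
    have su: "(\<Sum>j\<in>UNIV. upd t i 0 $ j) = S - t $ i" using sum_upd0 S_def by simp
    have pos: "S - t $ i > 0" using lt[of i] by simp
    have nz: "upd t i 0 \<noteq> 0"
    proof
      assume "upd t i 0 = 0" then have "(\<Sum>j\<in>UNIV. upd t i 0 $ j) = 0" by simp
      then show False using su pos by simp
    qed
    have wi: "1 - w $ i = (S - t $ i) / S" using S by (simp add: w_def field_simps)
    have veq: "(\<chi> j. upd t i 0 $ j / (S - t $ i)) = (\<chi> j. if j = i then 0 else w $ j / (1 - w $ i))"
      using S pos unfolding wi by (simp add: vec_eq_iff upd_def w_def)
    have "FF \<psi> (upd t i 0) = (S - t $ i) * \<psi> (\<chi> j. if j = i then 0 else w $ j / (1 - w $ i))"
      using nz su veq by (simp add: FF_def)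
    also have "\<dots> = S * ((1 - w $ i) * \<psi> (\<chi> j. if j = i then 0 else w $ j / (1 - w $ i)))"
      using S unfolding wi by simp
    also have "\<dots> \<le> S * \<psi> w" using B2 S by simp
    also have "\<dots> = FF \<psi> t" using \<open>t \<noteq> 0\<close> by (simp add: FF_def S_def w_def)
    finally show ?thesis .
  qed
qed


lemma upd_PP: "t \<in> PP \<Longrightarrow> 0 \<le> s \<Longrightarrow> upd t i s \<in> PP" by (simp add: PP_def upd_def)
lemma upd_upd[simp]: "upd (upd t i p) i q = upd t i q" by (simp add: upd_def vec_eq_iff)
lemma upd_same[simp]: "upd t i (t $ i) = t" by (simp add: upd_def vec_eq_iff)

lemma FF_mono1: fixes \<psi> :: "real ^ 'n::finite \<Rightarrow> real"
  assumes psi: "Psi_class \<psi>" and t: "t \<in> PP" and pq: "0 \<le> p" "p \<le> q"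
  shows "FF \<psi> (upd t i p) \<le> FF \<psi> (upd t i q)"
proof (cases "q = 0")
  case True then show ?thesis using pq by simp
next
  case False
  hence q: "q > 0" using pq by simp
  define l where "l = p / q"
  have l: "0 \<le> l" "l \<le> 1" using pq q by (auto simp: l_def)
  have eq: "upd t i p = (1 - l) *\<^sub>R upd t i 0 + l *\<^sub>R upd t i q"
    using q by (simp add: vec_eq_iff upd_def l_def field_simps)
  have P0: "upd t i 0 \<in> PP" and Pq: "upd t i q \<in> PP" using upd_PP[OF t] pq by auto
  have "FF \<psi> (upd t i p) \<le> (1 - l) * FF \<psi> (upd t i 0) + l * FF \<psi> (upd t i q)"
    unfolding eq by (rule FF_conv[OF psi P0 Pq l])
  also have "\<dots> \<le> (1 - l) * FF \<psi> (upd t i q) + l * FF \<psi> (upd t i q)"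
    using FF_B2[OF psi Pq, of i] l by (simp add: mult_left_mono)
  also have "\<dots> = FF \<psi> (upd t i q)" by (simp add: algebra_simps)
  finally show ?thesis .
qed

lemma FF_mono_aux: fixes \<psi> :: "real ^ 'n::finite \<Rightarrow> real"
  assumes psi: "Psi_class \<psi>" and D: "finite D"
  shows "\<forall>a b. a \<in> PP \<longrightarrow> (\<forall>i. a $ i \<le> b $ i) \<longrightarrow> (\<forall>i. i \<notin> D \<longrightarrow> a $ i = b $ i) \<longrightarrow> FF \<psi> a \<le> FF \<psi> b"
  using D
proof (induction D rule: finite_induct)
  case empty
  then show ?case by (metis order_refl vec_eq_iff empty_iff)
next
  case (insert i D)
  show ?case
  proof (intro allI impI)
    fix a b :: "real ^ 'n"
    assume a: "a \<in> PP" and ab: "\<forall>i. a $ i \<le> b $ i" and out: "\<forall>j. j \<notin> insert i D \<longrightarrow> a $ j = b $ j"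
    have b: "b \<in> PP" using a ab by (auto simp: PP_def intro: order_trans)
    have "FF \<psi> a \<le> FF \<psi> (upd b i (a $ i))"
      using insert.IH a ab out by (auto simp: upd_def)
    also have "\<dots> \<le> FF \<psi> (upd b i (b $ i))"
      using FF_mono1[OF psi b, of "a $ i" "b $ i" i] a ab by (auto simp: PP_def)
    finally show "FF \<psi> a \<le> FF \<psi> b" by simp
  qed
qed

lemma FF_mono: fixes \<psi> :: "real ^ 'n::finite \<Rightarrow> real"
  assumes psi: "Psi_class \<psi>" and a: "a \<in> PP" and ab: "\<And>i. a $ i \<le> b $ i"
  shows "FF \<psi> a \<le> FF \<psi> b"
  using FF_mono_aux[OF psi, of UNIV] a ab by auto

lemma FF_ge: fixes \<psi> :: "real ^ 'n::finite \<Rightarrow> real"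
  assumes psi: "Psi_class \<psi>" and t: "t \<in> PP"
  shows "t $ k \<le> FF \<psi> t"
proof -
  have "t $ k = FF \<psi> (t $ k *\<^sub>R axis k 1)"
    using FF_axis[of \<psi> k "t $ k"] psi t by (simp add: Psi_class_def PP_def)
  also have "\<dots> \<le> FF \<psi> t"
    by (rule FF_mono[OF psi]) (use t in \<open>auto simp: PP_def axis_def\<close>)
  finally show ?thesis .
qed


lemma FF_strict: fixes \<psi> :: "real ^ 'n::finite \<Rightarrow> real"
  assumes psi: "Psi_sc_class \<psi>" and a: "a \<in> PP" "a \<noteq> 0" and b: "b \<in> PP" "b \<noteq> 0"
    and R: "(\<chi> i. a $ i / (\<Sum>j\<in>UNIV. a $ j)) \<noteq> (\<chi> i. b $ i / (\<Sum>j\<in>UNIV. b $ j))"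
  shows "FF \<psi> (a + b) < FF \<psi> a + FF \<psi> b"
proof (rule FF_subadd_strict_gen[where R="\<lambda>x y. x \<noteq> y"])
  fix x y :: "real ^ 'n" and u :: real assume "x \<in> Omega" "y \<in> Omega" "0 < u" "u < 1" "x \<noteq> y"
  then show "\<psi> (u *\<^sub>R x + (1 - u) *\<^sub>R y) < u * \<psi> x + (1 - u) * \<psi> y"
    using psi by (auto simp: Psi_sc_class_def strictly_convex_on_def)
qed (use a b R in auto)

lemma FF_smono1: fixes \<psi> :: "real ^ 'n::finite \<Rightarrow> real"
  assumes psisc: "Psi_sc_class \<psi>" and t: "t \<in> PP" and pq: "0 \<le> p" "p < q"
  shows "FF \<psi> (upd t i p) < FF \<psi> (upd t i q)"
proof -
  have psi: "Psi_class \<psi>" using psisc by (simp add: Psi_sc_class_def)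
  have ax: "\<psi> (axis i 1) = 1" using psi by (simp add: Psi_class_def)
  show ?thesis
  proof (cases "\<forall>j. j \<noteq> i \<longrightarrow> t $ j = 0")
    case True
    have "\<And>s. upd t i s = s *\<^sub>R axis i 1" using True by (auto simp: upd_def vec_eq_iff axis_def)
    then show ?thesis using FF_axis[of \<psi> i p] FF_axis[of \<psi> i q] ax pq by simp
  next
    case False
    then obtain k where k: "k \<noteq> i" "t $ k \<noteq> 0" by blast
    have q: "q > 0" using pq by simp
    define a where "a = upd t i 0"
    define b where "b = upd t i q"
    have aP: "a \<in> PP" and bP: "b \<in> PP" using upd_PP[OF t] q by (auto simp: a_def b_def)
    have a0: "a \<noteq> 0" using k by (auto simp: a_def upd_def vec_eq_iff)
    have b0: "b \<noteq> 0" using q by (auto simp: b_def upd_def vec_eq_iff)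
    have Sb: "(\<Sum>j\<in>UNIV. b $ j) > 0" using sum_pos[OF bP b0] .
    have R: "(\<chi> i. a $ i / (\<Sum>j\<in>UNIV. a $ j)) \<noteq> (\<chi> i. b $ i / (\<Sum>j\<in>UNIV. b $ j))"
    proof
      assume "(\<chi> i. a $ i / (\<Sum>j\<in>UNIV. a $ j)) = (\<chi> i. b $ i / (\<Sum>j\<in>UNIV. b $ j))"
      hence "a $ i / (\<Sum>j\<in>UNIV. a $ j) = b $ i / (\<Sum>j\<in>UNIV. b $ j)" by (metis vec_lambda_beta)
      moreover have "a $ i = 0" "b $ i = q" by (auto simp: a_def b_def upd_def)
      ultimately show False using q Sb by simp
    qed
    have ab: "a + b = 2 *\<^sub>R upd t i (q/2)" by (simp add: a_def b_def upd_def vec_eq_iff)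
    have mP: "upd t i (q/2) \<in> PP" using upd_PP[OF t] q by simp
    have "2 * FF \<psi> (upd t i (q/2)) < FF \<psi> a + FF \<psi> b"
      using FF_strict[OF psisc aP a0 bP b0 R] FF_hom[OF mP, of 2 \<psi>] unfolding ab by simp
    moreover have "FF \<psi> a \<le> FF \<psi> (upd t i (q/2))"
      unfolding a_def by (rule FF_mono1[OF psi t]) (use q in auto)
    ultimately have h0: "FF \<psi> a < FF \<psi> b" by simp
    define l where "l = p / q"
    have l: "0 \<le> l" "l < 1" using pq q by (auto simp: l_def)
    have eq: "upd t i p = (1 - l) *\<^sub>R a + l *\<^sub>R b"
      using q by (simp add: vec_eq_iff upd_def l_def a_def b_def field_simps)
    have "FF \<psi> (upd t i p) \<le> (1 - l) * FF \<psi> a + l * FF \<psi> b"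
      unfolding eq by (rule FF_conv[OF psi aP bP]) (use l in auto)
    also have "\<dots> < (1 - l) * FF \<psi> b + l * FF \<psi> b"
      using h0 l by simp
    also have "\<dots> = FF \<psi> b" by (simp add: algebra_simps)
    finally show ?thesis by (simp add: b_def)
  qed
qed

lemma FF_smono: fixes \<psi> :: "real ^ 'n::finite \<Rightarrow> real"
  assumes psisc: "Psi_sc_class \<psi>" and a: "a \<in> PP" and ab: "\<And>i. a $ i \<le> b $ i" and lt: "a $ i < b $ i"
  shows "FF \<psi> a < FF \<psi> b"
proof -
  have psi: "Psi_class \<psi>" using psisc by (simp add: Psi_sc_class_def)
  have b: "b \<in> PP" using a ab by (auto simp: PP_def intro: order_trans)
  have "FF \<psi> a \<le> FF \<psi> (upd b i (a $ i))"
    by (rule FF_mono[OF psi a]) (use ab in \<open>auto simp: upd_def\<close>)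
  also have "\<dots> < FF \<psi> (upd b i (b $ i))"
    by (rule FF_smono1[OF psisc b]) (use a lt in \<open>auto simp: PP_def\<close>)
  finally show ?thesis by simp
qed


definition av :: "'a::real_normed_vector ^ 'n::finite \<Rightarrow> real ^ 'n" where
  "av x = (\<chi> i. norm (x $ i))"

lemma av_PP: "av x \<in> PP" by (simp add: av_def PP_def)
lemma av_zero: "av x = 0 \<longleftrightarrow> x = 0" by (simp add: av_def vec_eq_iff)
lemma psi_norm_av: "psi_norm \<psi> x = FF \<psi> (av x)" by (simp add: psi_norm_FF av_def)

lemma part1: fixes \<psi> :: "real ^ 'n::finite \<Rightarrow> real"
  assumes psi: "Psi_class \<psi>"
  shows "N_class (psi_norm \<psi> :: 'a::real_normed_vector ^ 'n \<Rightarrow> real)"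
proof -
  have ge: "norm (x $ k) \<le> psi_norm \<psi> x" for x :: "'a ^ 'n" and k
    using FF_ge[OF psi av_PP[of x], of k] by (simp add: psi_norm_av av_def)
  have nn: "0 \<le> psi_norm \<psi> x" for x :: "'a ^ 'n"
    using ge[of x] norm_ge_zero order_trans by blast
  have z: "psi_norm \<psi> x = 0 \<longleftrightarrow> x = 0" for x :: "'a ^ 'n"
  proof
    assume h: "psi_norm \<psi> x = 0"
    show "x = 0"
    proof (rule ccontr)
      assume "x \<noteq> 0"
      then obtain k where "x $ k \<noteq> 0" by (auto simp: vec_eq_iff)
      then show False using ge[of x k] h by simp
    qed
  qed (simp add: psi_norm_def)
  have hom: "psi_norm \<psi> (c *\<^sub>R x) = \<bar>c\<bar> * psi_norm \<psi> x" for c and x :: "'a ^ 'n"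
  proof -
    have "av (c *\<^sub>R x) = \<bar>c\<bar> *\<^sub>R av x" by (simp add: av_def vec_eq_iff)
    then show ?thesis using FF_hom[OF av_PP, of "\<bar>c\<bar>"] by (simp add: psi_norm_av)
  qed
  have tri: "psi_norm \<psi> (x + y) \<le> psi_norm \<psi> x + psi_norm \<psi> y" for x y :: "'a ^ 'n"
  proof -
    have "FF \<psi> (av (x + y)) \<le> FF \<psi> (av x + av y)"
      by (rule FF_mono[OF psi av_PP]) (simp add: av_def norm_triangle_ineq)
    also have "\<dots> \<le> FF \<psi> (av x) + FF \<psi> (av y)" by (rule FF_subadd[OF psi av_PP av_PP])
    finally show ?thesis by (simp add: psi_norm_av)
  qed
  have sg: "psi_norm \<psi> (\<chi> i. \<epsilon> i *\<^sub>R (x $ i)) = psi_norm \<psi> x"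
    if "\<forall>i. \<epsilon> i = 1 \<or> \<epsilon> i = -1" for x :: "'a ^ 'n" and \<epsilon> :: "'n \<Rightarrow> real"
  proof -
    have "\<And>i. \<bar>\<epsilon> i\<bar> = 1" using that by (metis abs_1 abs_minus)
    hence "av (\<chi> i. \<epsilon> i *\<^sub>R (x $ i)) = av x" by (simp add: av_def vec_eq_iff)
    then show ?thesis by (simp add: psi_norm_av)
  qed
  have a2: "psi_norm \<psi> ((\<chi> j. if j = i then v else 0) :: 'a ^ 'n) = norm v" for i v
  proof -
    have "av ((\<chi> j. if j = i then v else 0) :: 'a ^ 'n) = norm v *\<^sub>R axis i 1"
      by (simp add: av_def vec_eq_iff axis_def)
    moreover have "\<psi> (axis i 1) = 1" using psi by (simp add: Psi_class_def)
    ultimately show ?thesis using FF_axis[of \<psi> i "norm v"] by (simp add: psi_norm_av)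
  qed
  show ?thesis unfolding N_class_def is_norm_def
    apply (intro conjI allI impI)
    subgoal by (rule nn)
    subgoal by (rule z)
    subgoal by (rule hom)
    subgoal by (rule tri)
    subgoal by (rule sg) simp
    subgoal by (rule a2)
    done
qed

lemma part3: fixes \<psi> :: "real ^ 'n::finite \<Rightarrow> real" and u :: "'a::real_normed_vector ^ 'n"
  assumes u: "\<forall>i. norm (u $ i) = 1" and s: "s \<in> Omega"
  shows "\<psi> s = psi_norm \<psi> (\<chi> i. (s $ i) *\<^sub>R (u $ i))"
proof -
  have s0: "\<And>i. 0 \<le> s $ i" and s1: "(\<Sum>i\<in>UNIV. s $ i) = 1" using s by (auto simp: Omega_def)
  have avs: "av (\<chi> i. (s $ i) *\<^sub>R (u $ i)) = s" using u s0 by (simp add: av_def vec_eq_iff)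
  have "s \<noteq> 0" using s1 by auto
  moreover have "(\<chi> i. s $ i / 1) = s" by (simp add: vec_eq_iff)
  ultimately show ?thesis unfolding psi_norm_av avs FF_def using s1 by simp
qed


lemma part2: fixes \<psi> :: "real ^ 'n::finite \<Rightarrow> real"
  assumes psisc: "Psi_sc_class \<psi>" and sc: "strictly_convex_norm (norm :: 'a::real_normed_vector \<Rightarrow> real)"
  shows "strictly_convex_norm (psi_norm \<psi> :: 'a ^ 'n \<Rightarrow> real)"
  unfolding strictly_convex_norm_def
proof (intro allI impI, elim conjE)
  fix x y :: "'a ^ 'n"
  assume x1: "psi_norm \<psi> x = 1" and y1: "psi_norm \<psi> y = 1" and xy: "x \<noteq> y"
  have psi: "Psi_class \<psi>" using psisc by (simp add: Psi_sc_class_def)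
  define a where "a = av x"
  define b where "b = av y"
  have aP: "a \<in> PP" and bP: "b \<in> PP" by (simp_all add: a_def b_def av_PP)
  have Fa: "FF \<psi> a = 1" and Fb: "FF \<psi> b = 1" using x1 y1 by (simp_all add: a_def b_def psi_norm_av)
  have a0: "a \<noteq> 0" and b0: "b \<noteq> 0" using Fa Fb by (auto simp: FF_def)
  have hom: "psi_norm \<psi> ((1/2) *\<^sub>R (x + y)) = (1/2) * FF \<psi> (av (x + y))"
  proof -
    have "av ((1/2) *\<^sub>R (x + y)) = (1/2) *\<^sub>R av (x + y)" by (simp add: av_def vec_eq_iff)
    then show ?thesis using FF_hom[OF av_PP, of "1/2" \<psi> "x+y"] by (simp add: psi_norm_av)
  qed
  have le: "\<And>i. av (x + y) $ i \<le> (a + b) $ i" by (simp add: av_def a_def b_def norm_triangle_ineq)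
  have "FF \<psi> (av (x + y)) < 2"
  proof (cases "(\<chi> i. a $ i / (\<Sum>j\<in>UNIV. a $ j)) = (\<chi> i. b $ i / (\<Sum>j\<in>UNIV. b $ j))")
    case False
    have "FF \<psi> (av (x + y)) \<le> FF \<psi> (a + b)" by (rule FF_mono[OF psi av_PP le])
    also have "\<dots> < FF \<psi> a + FF \<psi> b" by (rule FF_strict[OF psisc aP a0 bP b0 False])
    finally show ?thesis using Fa Fb by simp
  next
    case True
    define S where "S = (\<Sum>j\<in>UNIV. a $ j)"
    define T where "T = (\<Sum>j\<in>UNIV. b $ j)"
    define w where "w = (\<chi> i. a $ i / S)"
    have S: "S > 0" using sum_pos[OF aP a0] S_def by simp
    have T: "T > 0" using sum_pos[OF bP b0] T_def by simp
    have w2: "w = (\<chi> i. b $ i / T)" using True by (simp add: w_def S_def T_def)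
    have "S * \<psi> w = 1" using Fa a0 by (simp add: FF_def S_def w_def)
    moreover have "T * \<psi> w = 1" using Fb b0 by (simp add: FF_def T_def w2)
    ultimately have ST: "S = T" by (metis mult_cancel_right mult_zero_left zero_neq_one)
    have aeqb: "\<And>i. a $ i = b $ i"
    proof -
      fix i
      have "a $ i / S = b $ i / T" using w2 by (metis w_def vec_lambda_beta)
      then show "a $ i = b $ i" using ST S by simp
    qed
    obtain i where xyi: "x $ i \<noteq> y $ i" using xy by (auto simp: vec_eq_iff)
    define r where "r = norm (x $ i)"
    have ry: "norm (y $ i) = r" using aeqb[of i] by (simp add: a_def b_def av_def r_def)
    have r: "r > 0"
    proof (rule ccontr)
      assume "\<not> r > 0" hence "r = 0" using norm_ge_zero r_def by (metis order_le_less)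
      then show False using xyi ry r_def by simp
    qed
    have u1: "norm ((1/r) *\<^sub>R x $ i) = 1" "norm ((1/r) *\<^sub>R y $ i) = 1" using r ry by (simp_all add: r_def)
    have un: "(1/r) *\<^sub>R x $ i \<noteq> (1/r) *\<^sub>R y $ i" using r xyi by simp
    have "norm ((1/2) *\<^sub>R ((1/r) *\<^sub>R x $ i + (1/r) *\<^sub>R y $ i)) < 1"
      using sc u1 un unfolding strictly_convex_norm_def by blast
    moreover have "(1/2) *\<^sub>R ((1/r) *\<^sub>R x $ i + (1/r) *\<^sub>R y $ i) = (1 / (2*r)) *\<^sub>R (x $ i + y $ i)"
      by (simp add: scaleR_add_right)
    ultimately have "norm (x $ i + y $ i) / (2 * r) < 1" using r by simp
    hence "norm (x $ i + y $ i) < 2 * r" using r by simp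
    hence lt: "av (x + y) $ i < (a + b) $ i" using ry by (simp add: av_def a_def b_def r_def)
    have "FF \<psi> (av (x + y)) < FF \<psi> (a + b)" by (rule FF_smono[OF psisc av_PP le lt])
    also have "\<dots> \<le> FF \<psi> a + FF \<psi> b" by (rule FF_subadd[OF psi aP bP])
    finally show ?thesis using Fa Fb by simp
  qed
  then show "psi_norm \<psi> ((1/2) *\<^sub>R (x + y)) < 1" using hom by simp
qed

theorem theorem2p10:
  fixes \<psi> :: "real ^ 'n::finite \<Rightarrow> real"
  assumes n2: "CARD('n) \<ge> 2"
    and psi: "Psi_class \<psi>"
  shows "N_class (psi_norm \<psi> :: 'a::real_normed_vector ^ 'n \<Rightarrow> real)
    \<and> (Psi_sc_class \<psi> \<and> strictly_convex_norm (norm :: 'a \<Rightarrow> real) \<longrightarrow>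
           N_sc_class (psi_norm \<psi> :: 'a ^ 'n \<Rightarrow> real))
    \<and> (\<forall>(u :: 'a ^ 'n) s. (\<forall>i. norm (u $ i) = 1) \<and> s \<in> Omega \<longrightarrow>
           \<psi> s = psi_norm \<psi> (\<chi> i. (s $ i) *\<^sub>R (u $ i)))"
  using part1[OF psi] part2 part3 by (auto simp: N_sc_class_def)

end
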